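(* For $n\ge 1$ let $a_n$ be the number of words $w=w_1\cdots w_n$ over $\{1,2,3\}$ such that there is no $i$ with $w_{i+1}=w_i+1$ and no $i$ with $w_{i+2}=w_i+2$ (i.e. $w$ simultaneously avoids the place-difference-value patterns $(12,(\mathbb{P},\{1\},\mathbb{P}),\{(1,2,\{1\})\},(\mathbb{P},\mathbb{P}))$ and $(12,(\mathbb{P},\{2\},\mathbb{P}),\{(1,2,\{2\})\},(\mathbb{P},\mathbb{P}))$). Then $a_1=3$, $a_2=7$, $a_n=a_{n-1}+a_{n-2}+n+1$ for $n\ge 3$, and consequently $a_n=F_{n+5}-n-4$ for all $n\ge1$, where $F_1=F_2=1$ and $F_m=F_{m-1}+F_{m-2}$. *)

theory Defs
  imports "HOL-Number_Theory.Fib"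
begin

definition avoids_pdv :: "nat list \<Rightarrow> bool" where
  "avoids_pdv w \<longleftrightarrow>
     (\<nexists>i. i + 1 < length w \<and> w ! (i + 1) = w ! i + 1) \<and>
     (\<nexists>i. i + 2 < length w \<and> w ! (i + 2) = w ! i + 2)"

definition a_seq :: "nat \<Rightarrow> nat" where
  "a_seq n = card {w. length w = n \<and> set w \<subseteq> {1,2,3} \<and> avoids_pdv w}"

end

theory Submission
  imports Defs
begin

lemma avoids_Cons:
  "avoids_pdv (x # v) \<longleftrightarrow>
     (v \<noteq> [] \<longrightarrow> v ! 0 \<noteq> x + 1) \<and> (length v \<ge> 2 \<longrightarrow> v ! 1 \<noteq> x + 2) \<and> avoids_pdv v"
proof -
  have e1: "(\<exists>i. i + 1 < length (x#v) \<and> (x#v) ! (i + 1) = (x#v) ! i + 1) \<longleftrightarrow>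
        (v \<noteq> [] \<and> v ! 0 = x + 1) \<or> (\<exists>i. i + 1 < length v \<and> v ! (i + 1) = v ! i + 1)"
  proof
    assume "\<exists>i. i + 1 < length (x#v) \<and> (x#v) ! (i + 1) = (x#v) ! i + 1"
    then obtain i where "i + 1 < length (x#v)" "(x#v) ! (i + 1) = (x#v) ! i + 1" by blast
    then show "(v \<noteq> [] \<and> v ! 0 = x + 1) \<or> (\<exists>i. i + 1 < length v \<and> v ! (i + 1) = v ! i + 1)"
      by (cases i) auto
  next
    assume "(v \<noteq> [] \<and> v ! 0 = x + 1) \<or> (\<exists>i. i + 1 < length v \<and> v ! (i + 1) = v ! i + 1)"
    then show "\<exists>i. i + 1 < length (x#v) \<and> (x#v) ! (i + 1) = (x#v) ! i + 1"
    proof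
      assume "v \<noteq> [] \<and> v ! 0 = x + 1" then show ?thesis by (intro exI[of _ 0]) auto
    next
      assume "\<exists>i. i + 1 < length v \<and> v ! (i + 1) = v ! i + 1"
      then obtain i where "i + 1 < length v" "v ! (i + 1) = v ! i + 1" by blast
      then show ?thesis by (intro exI[of _ "Suc i"]) auto
    qed
  qed
  have e2: "(\<exists>i. i + 2 < length (x#v) \<and> (x#v) ! (i + 2) = (x#v) ! i + 2) \<longleftrightarrow>
        (length v \<ge> 2 \<and> v ! 1 = x + 2) \<or> (\<exists>i. i + 2 < length v \<and> v ! (i + 2) = v ! i + 2)"
  proof
    assume "\<exists>i. i + 2 < length (x#v) \<and> (x#v) ! (i + 2) = (x#v) ! i + 2"
    then obtain i where "i + 2 < length (x#v)" "(x#v) ! (i + 2) = (x#v) ! i + 2" by blast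
    then show "(length v \<ge> 2 \<and> v ! 1 = x + 2) \<or> (\<exists>i. i + 2 < length v \<and> v ! (i + 2) = v ! i + 2)"
      by (cases i) (auto simp: numeral_2_eq_2)
  next
    assume "(length v \<ge> 2 \<and> v ! 1 = x + 2) \<or> (\<exists>i. i + 2 < length v \<and> v ! (i + 2) = v ! i + 2)"
    then show "\<exists>i. i + 2 < length (x#v) \<and> (x#v) ! (i + 2) = (x#v) ! i + 2"
    proof
      assume "length v \<ge> 2 \<and> v ! 1 = x + 2" then show ?thesis
        by (intro exI[of _ 0]) (auto simp: numeral_2_eq_2)
    next
      assume "\<exists>i. i + 2 < length v \<and> v ! (i + 2) = v ! i + 2"
      then obtain i where "i + 2 < length v" "v ! (i + 2) = v ! i + 2" by blast
      then show ?thesis by (intro exI[of _ "Suc i"]) (auto simp: numeral_2_eq_2)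
    qed
  qed
  show ?thesis unfolding avoids_pdv_def using e1 e2 by blast
qed

lemma avoids3: "avoids_pdv (a # b # c # w) \<longleftrightarrow> b \<noteq> a + 1 \<and> c \<noteq> a + 2 \<and> avoids_pdv (b # c # w)"
  by (subst avoids_Cons) auto

lemma avoids2: "avoids_pdv [a, b] \<longleftrightarrow> b \<noteq> a + 1"
  by (subst avoids_Cons) (auto simp: avoids_pdv_def)

lemma avoids1: "avoids_pdv [a]"
  by (auto simp: avoids_pdv_def)

lemma card_Suc_len:
  assumes "finite L"
  shows "card {w. length w = Suc n \<and> set w \<subseteq> L \<and> Q w} =
         (\<Sum>c\<in>L. card {w. length w = n \<and> set w \<subseteq> L \<and> Q (c # w)})"
proof -
  have eq: "{w. length w = Suc n \<and> set w \<subseteq> L \<and> Q w} =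
        (\<Union>c\<in>L. (Cons c) ` {w. length w = n \<and> set w \<subseteq> L \<and> Q (c # w)})"
  proof (rule set_eqI, rule iffI)
    fix w assume "w \<in> {w. length w = Suc n \<and> set w \<subseteq> L \<and> Q w}"
    then show "w \<in> (\<Union>c\<in>L. (Cons c) ` {w. length w = n \<and> set w \<subseteq> L \<and> Q (c # w)})"
      by (cases w) auto
  qed auto
  have fin: "finite {w. length w = n \<and> set w \<subseteq> L \<and> Q (c # w)}" for c
    by (rule finite_subset[OF _ finite_lists_length_eq[OF assms, of n]]) auto
  have "card (\<Union>c\<in>L. (Cons c) ` {w. length w = n \<and> set w \<subseteq> L \<and> Q (c # w)})
        = (\<Sum>c\<in>L. card ((Cons c) ` {w. length w = n \<and> set w \<subseteq> L \<and> Q (c # w)}))"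
    by (rule card_UN_disjoint) (auto simp: assms fin)
  also have "\<dots> = (\<Sum>c\<in>L. card {w. length w = n \<and> set w \<subseteq> L \<and> Q (c # w)})"
    by (intro sum.cong refl card_image) auto
  finally show ?thesis using eq by simp
qed

definition cnt :: "nat \<Rightarrow> nat \<Rightarrow> nat \<Rightarrow> nat" where
  "cnt n a b = card {w. length w = n \<and> set w \<subseteq> {1,2,3} \<and> avoids_pdv (a # b # w)}"

lemma cnt_0: "cnt 0 a b = (if b \<noteq> a + 1 then 1 else 0)"
proof -
  have "{w::nat list. length w = 0 \<and> set w \<subseteq> {1,2,3} \<and> avoids_pdv (a # b # w)}
        = (if b \<noteq> a + 1 then {[]} else {})" by (auto simp: avoids2)
  then show ?thesis unfolding cnt_def by simp
qed

lemma cnt_Suc: "cnt (Suc n) a b =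
   (\<Sum>c\<in>{1,2,3}. if b \<noteq> a + 1 \<and> c \<noteq> a + 2 then cnt n b c else 0)"
  unfolding cnt_def
  by (subst card_Suc_len) (auto simp: avoids3 intro!: sum.cong)

lemma a_seq_SS: "a_seq (Suc (Suc n)) = (\<Sum>a\<in>{1,2,3}. \<Sum>b\<in>{1,2,3}. cnt n a b)"
  unfolding a_seq_def cnt_def
  by (subst card_Suc_len, simp, rule sum.cong, simp, subst card_Suc_len, auto)

lemma a_seq_1: "a_seq 1 = 3"
proof -
  have "a_seq (Suc 0) = (\<Sum>a\<in>{1,2,3::nat}. card {w::nat list. length w = 0 \<and> set w \<subseteq> {1,2,3} \<and> avoids_pdv (a # w)})"
    unfolding a_seq_def by (subst card_Suc_len) auto
  also have "\<dots> = (\<Sum>a\<in>{1,2,3::nat}. 1)"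
  proof (rule sum.cong)
    fix a :: nat
    have "{w::nat list. length w = 0 \<and> set w \<subseteq> {1,2,3} \<and> avoids_pdv (a # w)} = {[]}"
      by (auto simp: avoids1)
    then show "card {w::nat list. length w = 0 \<and> set w \<subseteq> {1,2,3} \<and> avoids_pdv (a # w)} = 1" by simp
  qed simp
  finally show ?thesis by simp
qed

lemma cnt_closed:
  "int (cnt n 1 1) = 1 \<and> cnt n 1 2 = 0 \<and> cnt n 2 3 = 0 \<and>
   int (cnt n 2 1) = int (fib (Suc (Suc n))) \<and> int (cnt n 3 1) = int (fib (Suc (Suc n))) \<and>
   int (cnt n 1 3) = int (fib (Suc (Suc (Suc n)))) - 1 \<and>
   int (cnt n 2 2) = int (fib (Suc (Suc (Suc n)))) - 1 \<and>
   int (cnt n 3 2) = int (fib (Suc (Suc (Suc n)))) - 1 \<and>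
   int (cnt n 3 3) = int (fib (Suc (Suc (Suc (Suc (Suc n)))))) - int n - 4"
proof (induction n)
  case 0
  then show ?case by (simp add: cnt_0)
next
  case (Suc n)
  then show ?case by (simp add: cnt_Suc)
qed

theorem mainTheorem10:
  shows "a_seq 1 = 3 \<and> a_seq 2 = 7 \<and>
         (\<forall>n\<ge>3. a_seq n = a_seq (n - 1) + a_seq (n - 2) + n + 1) \<and>
         (\<forall>n\<ge>1. int (a_seq n) = int (fib (n + 5)) - int n - 4)"
proof -
  have A: "int (a_seq (Suc (Suc n))) = int (fib (Suc (Suc (Suc (Suc (Suc (Suc (Suc n)))))))) - int n - 6" for n
    using cnt_closed[of n] by (simp add: a_seq_SS)
  have B: "int (a_seq n) = int (fib (n + 5)) - int n - 4" if "n \<ge> 1" for n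
  proof (cases n)
    case 0 then show ?thesis using that by simp
  next
    case (Suc m)
    show ?thesis
    proof (cases m)
      case 0 then show ?thesis using Suc a_seq_1 by (simp add: numeral_eq_Suc)
    next
      case (Suc k)
      then show ?thesis using A[of k] \<open>n = Suc m\<close> by (simp add: numeral_eq_Suc)
    qed
  qed
  have C: "a_seq n = a_seq (n - 1) + a_seq (n - 2) + n + 1" if "n \<ge> 3" for n
  proof -
    have "int (a_seq n) = int (a_seq (n - 1)) + int (a_seq (n - 2)) + int n + 1"
      using B[of n] B[of "n-1"] B[of "n-2"] that
      by (cases n; cases "n-1"; cases "n-2"; simp add: numeral_eq_Suc)
    then show ?thesis by linarith
  qed
  have D: "a_seq 2 = 7" using B[of 2] by (simp add: numeral_eq_Suc)
  show ?thesis using a_seq_1 D B C by blast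
qed

end
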